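(* A set $\mathbf D$ of tilings is a Condorcet super-domain if and only if for any three tilings $T_1,T_2,T_3\in\mathbf D$, the set $sm(T_1,T_2,T_3)=(T_1\cap T_2)\cup(T_2\cap T_3)\cup(T_1\cap T_3)$ is a tiling.
   Context: Fix an integer $n\ge 3$ and write $[n]=\{1,\dots,n\}$. Let $\Lambda$ be the set of 3-element subsets of $[n]$; a triple $\{i,j,k\}$ with $i<j<k$ is written $ijk$. For a 4-element subset $F=\{i<j<k<l\}$ of $[n]$, the stick of $F$ is the sequence $(ijk,\ ijl,\ ikl,\ jkl)$. A tiling (the inversion set of a rhombus tiling of the zonogon $Z(n;2)$) is a subset $T\subseteq\Lambda$ such that for every 4-element $F\subseteq[n]$, $T\cap\mathrm{stick}(F)$ is an initial segment or a final segment of the stick (empty set and whole stick allowed). For a finite set $V$ of odd cardinality and tilings $(T_v)_{v\in V}$, $sm((T_v)_{v\in V})$ is the set of triples lying in $T_v$ for more than $|V|/2$ indices $v$. A set $\mathbf D$ of tilings is a Condorcet super-domain if for every finite $V$ of odd cardinality and every family $(T_v)_{v\in V}$ with all $T_v\in\mathbf D$, $sm((T_v)_{v\in V})$ is a tiling. *)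

theory Defs
  imports Main
begin

definition triples :: "nat \<Rightarrow> nat set set" where
  "triples n = {t. t \<subseteq> {1..n} \<and> card t = 3}"

definition stick :: "nat \<Rightarrow> nat \<Rightarrow> nat \<Rightarrow> nat \<Rightarrow> nat set list" where
  "stick i j k l = [{i,j,k}, {i,j,l}, {i,k,l}, {j,k,l}]"

definition tiling :: "nat \<Rightarrow> nat set set \<Rightarrow> bool" where
  "tiling n T \<longleftrightarrow> T \<subseteq> triples n \<and>
     (\<forall>i j k l. 1 \<le> i \<and> i < j \<and> j < k \<and> k < l \<and> l \<le> n \<longrightarrow>
        (\<exists>m \<le> 4. T \<inter> set (stick i j k l) = set (take m (stick i j k l))
                 \<or> T \<inter> set (stick i j k l) = set (drop m (stick i j k l))))"

definition sm :: "'v set \<Rightarrow> ('v \<Rightarrow> nat set set) \<Rightarrow> nat set set" where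
  "sm V T = {t. 2 * card {v \<in> V. t \<in> T v} > card V}"

text \<open>Condorcet super-domain; index sets V are finite sets of naturals (any finite set
  is in bijection with one).\<close>
definition condorcet_super_domain :: "nat \<Rightarrow> nat set set set \<Rightarrow> bool" where
  "condorcet_super_domain n D \<longleftrightarrow>
     (\<forall>(V::nat set) T. finite V \<and> odd (card V) \<and> (\<forall>v\<in>V. T v \<in> D) \<longrightarrow> tiling n (sm V T))"

end

theory Submission
  imports Defs
begin


definition bad3 :: "nat set set \<Rightarrow> nat set \<Rightarrow> nat set \<Rightarrow> nat set \<Rightarrow> bool" where
  "bad3 X x y z \<longleftrightarrow> (x \<in> X \<longleftrightarrow> z \<in> X) \<and> (x \<in> X \<longleftrightarrow> y \<notin> X)"

lemma ex_m4: "(\<exists>m\<le>(4::nat). P m) \<longleftrightarrow> P 0 \<or> P 1 \<or> P 2 \<or> P 3 \<or> P 4"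
proof -
  have "{m. m \<le> (4::nat)} = {0,1,2,3,4}" by auto
  then show ?thesis by (metis (mono_tags, lifting) empty_iff insert_iff mem_Collect_eq)
qed

lemma L1:
  assumes "distinct [a,b,c,d]"
  shows "(\<exists>m \<le> 4. X \<inter> set [a,b,c,d] = set (take m [a,b,c,d])
                 \<or> X \<inter> set [a,b,c,d] = set (drop m [a,b,c,d]))
    \<longleftrightarrow> \<not> bad3 X a b c \<and> \<not> bad3 X a b d \<and> \<not> bad3 X a c d \<and> \<not> bad3 X b c d"
proof -
  have d: "a \<noteq> b" "a \<noteq> c" "a \<noteq> d" "b \<noteq> c" "b \<noteq> d" "c \<noteq> d" using assms by auto
  have e0: "X \<inter> {a,b,c,d} = {} \<longleftrightarrow> a \<notin> X \<and> b \<notin> X \<and> c \<notin> X \<and> d \<notin> X" by blast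
  have e1: "X \<inter> {a,b,c,d} = {a,b,c,d} \<longleftrightarrow> a \<in> X \<and> b \<in> X \<and> c \<in> X \<and> d \<in> X" by blast
  have e2: "X \<inter> {a,b,c,d} = {a} \<longleftrightarrow> a \<in> X \<and> b \<notin> X \<and> c \<notin> X \<and> d \<notin> X" using d by blast
  have e3: "X \<inter> {a,b,c,d} = {b,c,d} \<longleftrightarrow> a \<notin> X \<and> b \<in> X \<and> c \<in> X \<and> d \<in> X" using d by blast
  have e4: "X \<inter> {a,b,c,d} = {a,b} \<longleftrightarrow> a \<in> X \<and> b \<in> X \<and> c \<notin> X \<and> d \<notin> X" using d by blast
  have e5: "X \<inter> {a,b,c,d} = {c,d} \<longleftrightarrow> a \<notin> X \<and> b \<notin> X \<and> c \<in> X \<and> d \<in> X" using d by blast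
  have e6: "X \<inter> {a,b,c,d} = {a,b,c} \<longleftrightarrow> a \<in> X \<and> b \<in> X \<and> c \<in> X \<and> d \<notin> X" using d by blast
  have e7: "X \<inter> {a,b,c,d} = {d} \<longleftrightarrow> a \<notin> X \<and> b \<notin> X \<and> c \<notin> X \<and> d \<in> X" using d by blast
  have tk: "set (take 0 [a,b,c,d]) = {}" "set (take 1 [a,b,c,d]) = {a}" "set (take 2 [a,b,c,d]) = {a,b}"
    "set (take 3 [a,b,c,d]) = {a,b,c}" "set (take 4 [a,b,c,d]) = {a,b,c,d}"
    "set (drop 0 [a,b,c,d]) = {a,b,c,d}" "set (drop 1 [a,b,c,d]) = {b,c,d}" "set (drop 2 [a,b,c,d]) = {c,d}"
    "set (drop 3 [a,b,c,d]) = {d}" "set (drop 4 [a,b,c,d]) = {}" "set [a,b,c,d] = {a,b,c,d}"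
    by (simp_all add: numeral_eq_Suc)
  show ?thesis unfolding ex_m4 tk e0 e1 e2 e3 e4 e5 e6 e7 bad3_def
    by (cases "a\<in>X"; cases "b\<in>X"; cases "c\<in>X"; cases "d\<in>X"; simp)
qed


definition med :: "nat set set \<Rightarrow> nat set set \<Rightarrow> nat set set \<Rightarrow> nat set set" where
  "med A B C = (A \<inter> B) \<union> (B \<inter> C) \<union> (A \<inter> C)"

lemma agree_big:
  assumes "finite V" "odd (card V)"
  shows "2 * card {v\<in>V. (x \<in> T v \<longleftrightarrow> x \<in> sm V T)} > card V"
proof (cases "x \<in> sm V T")
  case True then show ?thesis by (simp add: sm_def)
next
  case False
  have c: "card {v\<in>V. x \<notin> T v} = card V - card {v\<in>V. x \<in> T v}"
  proof -
    have "{v\<in>V. x \<notin> T v} = V - {v\<in>V. x \<in> T v}" by auto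
    then show ?thesis using assms(1) by (simp add: card_Diff_subset)
  qed
  have le: "card {v\<in>V. x \<in> T v} \<le> card V" using assms(1) by (intro card_mono) auto
  from False have "2 * card {v\<in>V. x \<in> T v} \<le> card V" by (simp add: sm_def)
  with assms(2) have "2 * card {v\<in>V. x \<in> T v} < card V" by (metis dvd_triv_left le_neq_implies_less)
  then show ?thesis using False c le by simp
qed

lemma pigeon:
  assumes "finite V" "2 * card {v\<in>V. P v} > card V" "2 * card {v\<in>V. Q v} > card V"
  shows "\<exists>v\<in>V. P v \<and> Q v"
proof (rule ccontr)
  assume "\<not> ?thesis"
  then have "{v\<in>V. P v} \<inter> {v\<in>V. Q v} = {}" by auto
  then have "card ({v\<in>V. P v} \<union> {v\<in>V. Q v}) = card {v\<in>V. P v} + card {v\<in>V. Q v}"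
    using assms(1) by (simp add: card_Un_disjoint)
  moreover have "card ({v\<in>V. P v} \<union> {v\<in>V. Q v}) \<le> card V" using assms(1) by (intro card_mono) auto
  ultimately show False using assms by linarith
qed

lemma K:
  assumes "finite V" "odd (card V)" "\<forall>v\<in>V. T v \<in> D"
    and H: "\<forall>T1\<in>D. \<forall>T2\<in>D. \<forall>T3\<in>D. \<not> bad3 (med T1 T2 T3) x y z"
  shows "\<not> bad3 (sm V T) x y z"
proof
  assume b: "bad3 (sm V T) x y z"
  let ?m = "sm V T"
  obtain u where u: "u\<in>V" "x \<in> T u \<longleftrightarrow> x \<in> ?m" "y \<in> T u \<longleftrightarrow> y \<in> ?m"
    using pigeon[OF assms(1) agree_big[OF assms(1,2)] agree_big[OF assms(1,2)], of x T y T] by blast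
  obtain w where w: "w\<in>V" "y \<in> T w \<longleftrightarrow> y \<in> ?m" "z \<in> T w \<longleftrightarrow> z \<in> ?m"
    using pigeon[OF assms(1) agree_big[OF assms(1,2)] agree_big[OF assms(1,2)], of y T z T] by blast
  obtain r where r: "r\<in>V" "x \<in> T r \<longleftrightarrow> x \<in> ?m" "z \<in> T r \<longleftrightarrow> z \<in> ?m"
    using pigeon[OF assms(1) agree_big[OF assms(1,2)] agree_big[OF assms(1,2)], of x T z T] by blast
  have "bad3 (med (T u) (T w) (T r)) x y z"
    using b u w r unfolding bad3_def med_def by blast
  moreover have "T u \<in> D" "T w \<in> D" "T r \<in> D" using u w r assms(3) by auto
  ultimately show False using H by blast
qed

lemma stick_distinct:
  assumes "i < j" "j < k" "k < l"
  shows "distinct (stick i j k l)"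
  using assms unfolding stick_def
  by (auto simp: insert_eq_iff insert_commute doubleton_eq_iff)

lemma tiling_iff:
  "tiling n T \<longleftrightarrow> T \<subseteq> triples n \<and>
     (\<forall>i j k l. 1 \<le> i \<and> i < j \<and> j < k \<and> k < l \<and> l \<le> n \<longrightarrow>
        \<not> bad3 T {i,j,k} {i,j,l} {i,k,l} \<and> \<not> bad3 T {i,j,k} {i,j,l} {j,k,l} \<and>
        \<not> bad3 T {i,j,k} {i,k,l} {j,k,l} \<and> \<not> bad3 T {i,j,l} {i,k,l} {j,k,l})"
  unfolding tiling_def
  using L1[OF stick_distinct[unfolded stick_def]] unfolding stick_def
  by (smt (verit))

lemma sm3:
  "sm {0,1,2::nat} (\<lambda>v. if v = 0 then A else if v = 1 then B else C) = med A B C"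
proof -
  have "card {v\<in>{0,1,2::nat}. P v} = of_bool (P 0) + of_bool (P 1) + of_bool (P 2)" for P
  proof -
    have "{v\<in>{0,1,2::nat}. P v} = (if P 0 then {0} else {}) \<union> (if P 1 then {1} else {}) \<union> (if P 2 then {2} else {})"
    proof (rule set_eqI)
      fix x :: nat
      show "x \<in> {v\<in>{0,1,2::nat}. P v} \<longleftrightarrow> x \<in> (if P 0 then {0} else {}) \<union> (if P 1 then {1} else {}) \<union> (if P 2 then {2} else {})"
        by (cases "x = 0"; cases "x = 1"; cases "x = 2") auto
    qed
    then show ?thesis by (cases "P 0"; cases "P 1"; cases "P 2") simp_all
  qed
  note cc = this
  show ?thesis
  proof (rule set_eqI)
    fix t
    show "t \<in> sm {0,1,2::nat} (\<lambda>v. if v = 0 then A else if v = 1 then B else C) \<longleftrightarrow> t \<in> med A B C"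
      unfolding sm_def mem_Collect_eq cc med_def
      by (cases "t \<in> A"; cases "t \<in> B"; cases "t \<in> C") simp_all
  qed
qed

theorem theorem1:
  fixes n :: nat and D :: "nat set set set"
  assumes "n \<ge> 3"
    and "\<forall>T\<in>D. tiling n T"
  shows "condorcet_super_domain n D \<longleftrightarrow>
    (\<forall>T1\<in>D. \<forall>T2\<in>D. \<forall>T3\<in>D. tiling n ((T1 \<inter> T2) \<union> (T2 \<inter> T3) \<union> (T1 \<inter> T3)))"
proof
  assume c: "condorcet_super_domain n D"
  show "\<forall>T1\<in>D. \<forall>T2\<in>D. \<forall>T3\<in>D. tiling n ((T1 \<inter> T2) \<union> (T2 \<inter> T3) \<union> (T1 \<inter> T3))"
  proof (intro ballI)
    fix T1 T2 T3 assume "T1 \<in> D" "T2 \<in> D" "T3 \<in> D"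
    then have "tiling n (sm {0,1,2::nat} (\<lambda>v. if v = 0 then T1 else if v = 1 then T2 else T3))"
      using c unfolding condorcet_super_domain_def by (elim allE impE) auto
    then show "tiling n ((T1 \<inter> T2) \<union> (T2 \<inter> T3) \<union> (T1 \<inter> T3))"
      unfolding sm3 med_def .
  qed
next
  assume H: "\<forall>T1\<in>D. \<forall>T2\<in>D. \<forall>T3\<in>D. tiling n ((T1 \<inter> T2) \<union> (T2 \<inter> T3) \<union> (T1 \<inter> T3))"
  then have H': "\<forall>T1\<in>D. \<forall>T2\<in>D. \<forall>T3\<in>D. tiling n (med T1 T2 T3)" unfolding med_def .
  show "condorcet_super_domain n D"
    unfolding condorcet_super_domain_def
  proof (intro allI impI, elim conjE)
    fix V :: "nat set" and T
    assume V: "finite V" "odd (card V)" "\<forall>v\<in>V. T v \<in> D"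
    have sub: "sm V T \<subseteq> triples n"
    proof
      fix t assume "t \<in> sm V T"
      then have "card {v\<in>V. t \<in> T v} \<noteq> 0" by (auto simp: sm_def)
      then have "{v\<in>V. t \<in> T v} \<noteq> {}" by (metis card.empty)
      then obtain v where "v \<in> V" "t \<in> T v" by auto
      then show "t \<in> triples n" using V(3) assms(2) unfolding tiling_def by blast
    qed
    show "tiling n (sm V T)"
      unfolding tiling_iff
    proof (rule conjI[OF sub], intro allI impI)
      fix i j k l :: nat
      assume ijkl: "1 \<le> i \<and> i < j \<and> j < k \<and> k < l \<and> l \<le> n"
      have HH: "\<forall>T1\<in>D. \<forall>T2\<in>D. \<forall>T3\<in>D.
        \<not> bad3 (med T1 T2 T3) {i,j,k} {i,j,l} {i,k,l} \<and> \<not> bad3 (med T1 T2 T3) {i,j,k} {i,j,l} {j,k,l} \<and>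
        \<not> bad3 (med T1 T2 T3) {i,j,k} {i,k,l} {j,k,l} \<and> \<not> bad3 (med T1 T2 T3) {i,j,l} {i,k,l} {j,k,l}"
        using H' ijkl unfolding tiling_iff by blast
      show "\<not> bad3 (sm V T) {i,j,k} {i,j,l} {i,k,l} \<and> \<not> bad3 (sm V T) {i,j,k} {i,j,l} {j,k,l} \<and>
        \<not> bad3 (sm V T) {i,j,k} {i,k,l} {j,k,l} \<and> \<not> bad3 (sm V T) {i,j,l} {i,k,l} {j,k,l}"
        by (intro conjI K[OF V]; use HH in blast)
    qed
  qed
qed

end
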